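(* Fix positive integers $k,x^*$, a real number $n'$ treated as an indeterminate, and real numbers $b_1,\dots,b_k$ (indices mod $k$). For $x=(x_1,\dots,x_k)\in\{0,\dots,x^*\}^k$ consider $$E_x(n')=\sum_{i=1}^{k}\prod_{j=1}^{k}\prod_{h=x_j+1}^{x^*}(n'-b_{j+i}+h),$$ a polynomial in $n'$ of degree $L=\sum_{j=1}^k(x^*-x_j)$. Then for every integer $m\ge 0$, the coefficient of $n'^{\,L-m}$ in $E_x(n')$ is a linear combination of cyclic statistics of $x$ of order at most $m$, each multiplied by some function of $x$ that is invariant under permutations of $(x_1,\dots,x_k)$ (these functions and the statistics used may depend on $b$ and $x^*$ but are the same for all $x$).
   Context: For indices $i_1,\dots,i_r$ (mod $k$), the cyclic statistic of order $r$ is $S_{i_1,\dots,i_r}(x)=\sum_{j=1}^{k}x_{i_1+j}\cdots x_{i_r+j}$; a cyclic statistic of order $0$ is understood as a constant. *)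

theory Defs
  imports "HOL-Computational_Algebra.Polynomial" "HOL-Library.Multiset"
begin

text \<open>Vectors x = (x_1,...,x_k) are lists of length k, indexed 0..k-1; all indices are taken mod k.\<close>

definition cyc_stat :: "nat \<Rightarrow> nat list \<Rightarrow> nat list \<Rightarrow> real" where
  "cyc_stat k is x = (\<Sum>j<k. \<Prod>l<length is. real (x ! ((is ! l + j) mod k)))"

definition E_poly :: "nat \<Rightarrow> nat \<Rightarrow> (nat \<Rightarrow> real) \<Rightarrow> nat list \<Rightarrow> real poly" where
  "E_poly k xs b x = (\<Sum>i<k. \<Prod>j<k. \<Prod>h\<in>{x ! j + 1..xs}. [: real h - b ((j + i) mod k), 1 :])"

definition L_deg :: "nat \<Rightarrow> nat \<Rightarrow> nat list \<Rightarrow> nat" where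
  "L_deg k xs x = (\<Sum>j<k. xs - x ! j)"

definition perm_invariant :: "(nat list \<Rightarrow> real) \<Rightarrow> bool" where
  "perm_invariant c \<longleftrightarrow> (\<forall>y z. mset y = mset z \<longrightarrow> c y = c z)"

end

theory Submission
  imports Defs
begin


lemma sum_mod_shift_lt:
  fixes F :: "nat \<Rightarrow> 'a::comm_monoid_add"
  assumes "c < k"
  shows "(\<Sum>a<k. F ((a + c) mod k)) = (\<Sum>a<k. F a)"
proof (rule sum.reindex_bij_witness[where j="\<lambda>a. (a + c) mod k" and i="\<lambda>a. (a + (k - c)) mod k"])
  fix a assume a: "a \<in> {..<k}"
  have "((a + c) mod k + (k - c)) mod k = (a + c + (k - c)) mod k"
    by (simp add: mod_add_left_eq)
  also have "a + c + (k - c) = a + k" using assms by simp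
  finally show "((a + c) mod k + (k - c)) mod k = a" using a by simp
  show "(a + c) mod k \<in> {..<k}" using assms by simp
next
  fix a assume a: "a \<in> {..<k}"
  have "((a + (k - c)) mod k + c) mod k = (a + (k - c) + c) mod k"
    by (simp add: mod_add_left_eq)
  also have "a + (k - c) + c = a + k" using assms by simp
  finally show "((a + (k - c)) mod k + c) mod k = a" using a by simp
  show "(a + (k - c)) mod k \<in> {..<k}" using assms by simp
qed simp

lemma sum_mod_shift:
  fixes F :: "nat \<Rightarrow> 'a::comm_monoid_add"
  assumes "k > 0"
  shows "(\<Sum>a<k. F ((a + c) mod k)) = (\<Sum>a<k. F a)"
proof -
  have "(\<Sum>a<k. F ((a + c) mod k)) = (\<Sum>a<k. F ((a + c mod k) mod k))"
    by (simp add: mod_add_right_eq)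
  also have "\<dots> = (\<Sum>a<k. F a)" using assms by (intro sum_mod_shift_lt) simp
  finally show ?thesis .
qed

lemma sum_reflect:
  fixes G :: "nat \<Rightarrow> 'a::comm_monoid_add"
  shows "(\<Sum>i<k. G ((k - i) mod k)) = (\<Sum>j<k. G j)"
  by (rule sum.reindex_bij_witness[where j="\<lambda>i. (k - i) mod k" and i="\<lambda>i. (k - i) mod k"])
     (auto simp: mod_if)



definition dm :: "nat \<Rightarrow> nat \<Rightarrow> nat \<Rightarrow> nat list \<Rightarrow> bool" where
  "dm k X i x \<longleftrightarrow> i < k \<and> length x = k \<and> (\<forall>j<k. x ! j \<le> X)"

inductive W :: "nat \<Rightarrow> nat \<Rightarrow> nat \<Rightarrow> (nat \<Rightarrow> nat list \<Rightarrow> real) \<Rightarrow> bool" for k X where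
  Wsym: "perm_invariant c \<Longrightarrow> W k X 0 (\<lambda>i x. c x)"
| Wcoord: "W k X 1 (\<lambda>i x. real (x ! ((a + k - i) mod k)))"
| Wadd: "W k X m f \<Longrightarrow> W k X m g \<Longrightarrow> W k X m (\<lambda>i x. f i x + g i x)"
| Wmul: "W k X m f \<Longrightarrow> W k X n g \<Longrightarrow> W k X (m + n) (\<lambda>i x. f i x * g i x)"
| Wmono: "W k X m f \<Longrightarrow> m \<le> n \<Longrightarrow> W k X n f"
| Wcong: "W k X m f \<Longrightarrow> (\<And>i x. dm k X i x \<Longrightarrow> g i x = f i x) \<Longrightarrow> W k X m g"

definition mono_t :: "nat \<Rightarrow> nat list \<Rightarrow> nat \<Rightarrow> nat list \<Rightarrow> real" where
  "mono_t k is i x = (\<Prod>p\<leftarrow>is. real (x ! ((p + k - i) mod k)))"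

definition NF :: "nat \<Rightarrow> nat \<Rightarrow> nat \<Rightarrow> (nat \<Rightarrow> nat list \<Rightarrow> real) \<Rightarrow> bool" where
  "NF k X m w \<longleftrightarrow> (\<exists>T :: (nat list \<times> (nat list \<Rightarrow> real)) list.
     (\<forall>(is, c) \<in> set T. length is \<le> m \<and> perm_invariant c) \<and>
     (\<forall>i x. dm k X i x \<longrightarrow> w i x = (\<Sum>(is, c) \<leftarrow> T. c x * mono_t k is i x)))"

lemma sum_list_product:
  fixes F :: "'a \<Rightarrow> real" and G :: "'b \<Rightarrow> real"
  shows "(\<Sum>u\<leftarrow>A. F u) * (\<Sum>v\<leftarrow>B. G v) = (\<Sum>(u, v)\<leftarrow>List.product A B. F u * G v)"
  by (induction A) (simp_all add: algebra_simps sum_list_const_mult o_def)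

lemma perm_invariant_mult: "perm_invariant c \<Longrightarrow> perm_invariant d \<Longrightarrow> perm_invariant (\<lambda>x. c x * d x)"
  unfolding perm_invariant_def by metis

lemma ballD2: "\<forall>(a, b) \<in> S. P a b \<Longrightarrow> (x, y) \<in> S \<Longrightarrow> P x y" by auto

lemma W_NF: "W k X m w \<Longrightarrow> NF k X m w"
proof (induction rule: W.induct)
  case (Wsym c)
  show ?case unfolding NF_def
    by (rule exI[of _ "[([], c)]"]) (simp add: Wsym mono_t_def)
next
  case (Wcoord a)
  have "perm_invariant (\<lambda>x. 1)" by (simp add: perm_invariant_def)
  then show ?case unfolding NF_def
    by (intro exI[of _ "[([a], \<lambda>x. 1)]"]) (simp add: mono_t_def)
next
  case (Wadd m f g)
  then obtain T1 T2 where
    T1: "\<forall>(is, c) \<in> set T1. length is \<le> m \<and> perm_invariant c"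
        "\<forall>i x. dm k X i x \<longrightarrow> f i x = (\<Sum>(is, c) \<leftarrow> T1. c x * mono_t k is i x)" and
    T2: "\<forall>(is, c) \<in> set T2. length is \<le> m \<and> perm_invariant c"
        "\<forall>i x. dm k X i x \<longrightarrow> g i x = (\<Sum>(is, c) \<leftarrow> T2. c x * mono_t k is i x)"
    unfolding NF_def by blast
  show ?case unfolding NF_def
    by (rule exI[of _ "T1 @ T2"]) (use T1 T2 in auto)
next
  case (Wmul m f n g)
  then obtain T1 T2 where
    T1: "\<forall>(is, c) \<in> set T1. length is \<le> m \<and> perm_invariant c"
        "\<forall>i x. dm k X i x \<longrightarrow> f i x = (\<Sum>(is, c) \<leftarrow> T1. c x * mono_t k is i x)" and
    T2: "\<forall>(is, c) \<in> set T2. length is \<le> n \<and> perm_invariant c"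
        "\<forall>i x. dm k X i x \<longrightarrow> g i x = (\<Sum>(is, c) \<leftarrow> T2. c x * mono_t k is i x)"
    unfolding NF_def by blast
  define T where "T = map (\<lambda>((is1, c1), (is2, c2)). (is1 @ is2, \<lambda>x. c1 x * c2 x)) (List.product T1 T2)"
  have "\<forall>(is, c) \<in> set T. length is \<le> m + n \<and> perm_invariant c"
  proof
    fix p assume "p \<in> set T"
    then obtain a1 c1 a2 c2 where u: "(a1, c1) \<in> set T1" "(a2, c2) \<in> set T2"
      and p: "p = (a1 @ a2, \<lambda>x. c1 x * c2 x)" unfolding T_def by auto
    have 1: "length a1 \<le> m \<and> perm_invariant c1" using ballD2[OF T1(1) u(1)] by simp
    have 2: "length a2 \<le> n \<and> perm_invariant c2" using ballD2[OF T2(1) u(2)] by simp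
    show "case p of (is, c) \<Rightarrow> length is \<le> m + n \<and> perm_invariant c"
      unfolding p using 1 2 by (simp add: perm_invariant_mult)
  qed
  moreover have "\<forall>i x. dm k X i x \<longrightarrow> f i x * g i x = (\<Sum>(is, c) \<leftarrow> T. c x * mono_t k is i x)"
  proof (intro allI impI)
    fix i x assume d: "dm k X i x"
    have "f i x * g i x = (\<Sum>(is, c) \<leftarrow> T1. c x * mono_t k is i x) * (\<Sum>(is, c) \<leftarrow> T2. c x * mono_t k is i x)"
      using T1(2) T2(2) d by simp
    also have "\<dots> = (\<Sum>(u, v)\<leftarrow>List.product T1 T2. (case u of (is, c) \<Rightarrow> c x * mono_t k is i x) * (case v of (is, c) \<Rightarrow> c x * mono_t k is i x))"
      by (rule sum_list_product)
    also have "\<dots> = (\<Sum>(is, c) \<leftarrow> T. c x * mono_t k is i x)"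
      unfolding T_def map_map
    proof (intro arg_cong[where f=sum_list] map_cong refl)
      fix p :: "(nat list \<times> (nat list \<Rightarrow> real)) \<times> (nat list \<times> (nat list \<Rightarrow> real))"
      obtain a1 c1 a2 c2 where p: "p = ((a1, c1), (a2, c2))" by (metis prod.exhaust)
      show "(case p of (u, v) \<Rightarrow> (case u of (is, c) \<Rightarrow> c x * mono_t k is i x) * (case v of (is, c) \<Rightarrow> c x * mono_t k is i x))
         = ((\<lambda>(is, c). c x * mono_t k is i x) \<circ> (\<lambda>((is1, c1), (is2, c2)). (is1 @ is2, \<lambda>x. c1 x * c2 x))) p"
        unfolding p by (simp add: mono_t_def)
    qed
    finally show "f i x * g i x = (\<Sum>(is, c) \<leftarrow> T. c x * mono_t k is i x)" .
  qed
  ultimately show ?case unfolding NF_def by blast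
next
  case (Wmono m f n)
  from Wmono.IH obtain T where T: "\<forall>(is, c) \<in> set T. length is \<le> m \<and> perm_invariant c"
        "\<forall>i x. dm k X i x \<longrightarrow> f i x = (\<Sum>(is, c) \<leftarrow> T. c x * mono_t k is i x)"
    unfolding NF_def by blast
  have "\<forall>(is, c) \<in> set T. length is \<le> n \<and> perm_invariant c"
    using T(1) Wmono.hyps(2) by fastforce
  with T(2) show ?case unfolding NF_def by blast
next
  case (Wcong m f g)
  from Wcong.IH obtain T where T: "\<forall>(is, c) \<in> set T. length is \<le> m \<and> perm_invariant c"
        "\<forall>i x. dm k X i x \<longrightarrow> f i x = (\<Sum>(is, c) \<leftarrow> T. c x * mono_t k is i x)"
    unfolding NF_def by blast
  have "\<forall>i x. dm k X i x \<longrightarrow> g i x = (\<Sum>(is, c) \<leftarrow> T. c x * mono_t k is i x)"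
    using T(2) Wcong.hyps(2) by simp
  with T(1) show ?case unfolding NF_def by blast
qed



definition ecoef :: "real list \<Rightarrow> nat \<Rightarrow> real" where
  "ecoef U m = coeff (prod_list (map (\<lambda>a. [:1, a:]) U)) m"

definition psum :: "real list \<Rightarrow> nat \<Rightarrow> real" where
  "psum U r = (\<Sum>a\<leftarrow>U. a ^ r)"

lemma ecoef_Nil: "ecoef [] m = (if m = 0 then 1 else 0)"
  by (simp add: ecoef_def)

lemma ecoef_Cons: "ecoef (a # U) m = ecoef U m + (if m = 0 then 0 else a * ecoef U (m - 1))"
proof -
  have "[:1, a:] * p = p + pCons 0 (smult a p)" for p :: "real poly"
    by (simp add: mult_pCons_left)
  then show ?thesis by (cases m) (simp_all add: ecoef_def)
qed

lemma psum_Cons: "psum (a # U) r = a ^ r + psum U r"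
  by (simp add: psum_def)

lemma ecoef_0: "ecoef U 0 = 1"
  by (induction U) (simp_all add: ecoef_Nil ecoef_Cons)

lemma ecoef_big: "length U < m \<Longrightarrow> ecoef U m = 0"
  by (induction U arbitrary: m) (auto simp: ecoef_Nil ecoef_Cons)

lemma newton:
  "real (Suc n) * ecoef U (Suc n) = (\<Sum>r\<le>n. (-1) ^ r * ecoef U (n - r) * psum U (Suc r))"
proof (induction U arbitrary: n)
  case Nil
  then show ?case by (simp add: ecoef_Nil psum_def)
next
  case (Cons a U)
  define e where "e = ecoef U"
  define p where "p = psum U"
  have IH: "\<And>n. real (Suc n) * e (Suc n) = (\<Sum>r\<le>n. (-1) ^ r * e (n - r) * p (Suc r))"
    using Cons.IH unfolding e_def p_def .
  have e': "\<And>j. ecoef (a # U) j = e j + (if j = 0 then 0 else a * e (j - 1))"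
    unfolding e_def by (rule ecoef_Cons)
  have p': "\<And>r. psum (a # U) r = a ^ r + p r"
    unfolding p_def by (rule psum_Cons)
  have split: "(\<Sum>r\<le>n. (-1) ^ r * ecoef (a # U) (n - r) * psum (a # U) (Suc r))
    = (\<Sum>r\<le>n. (-1) ^ r * e (n - r) * p (Suc r))
    + (\<Sum>r\<le>n. (-1) ^ r * e (n - r) * a ^ Suc r)
    + (\<Sum>r\<le>n. (-1) ^ r * (if n - r = 0 then 0 else a * e (n - r - 1)) * p (Suc r))
    + (\<Sum>r\<le>n. (-1) ^ r * (if n - r = 0 then 0 else a * e (n - r - 1)) * a ^ Suc r)"
    unfolding e' p' by (simp add: sum.distrib[symmetric] algebra_simps)
  have A: "(\<Sum>r\<le>n. (-1) ^ r * e (n - r) * p (Suc r)) = real (Suc n) * e (Suc n)"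
    using IH by simp
  have C: "(\<Sum>r\<le>n. (-1) ^ r * (if n - r = 0 then 0 else a * e (n - r - 1)) * p (Suc r)) = a * real n * e n"
  proof (cases n)
    case 0 then show ?thesis by simp
  next
    case (Suc n')
    have "(\<Sum>r\<le>n. (-1) ^ r * (if n - r = 0 then 0 else a * e (n - r - 1)) * p (Suc r))
        = (\<Sum>r\<le>n'. (-1) ^ r * (if n - r = 0 then 0 else a * e (n - r - 1)) * p (Suc r))"
      unfolding Suc by (simp add: sum.atMost_Suc)
    also have "\<dots> = a * (\<Sum>r\<le>n'. (-1) ^ r * e (n' - r) * p (Suc r))"
      unfolding sum_distrib_left
      by (rule sum.cong) (auto simp: Suc Suc_diff_le)
    also have "\<dots> = a * real n * e n" using IH[of n'] Suc by simp
    finally show ?thesis .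
  qed
  have BD: "(\<Sum>r\<le>n. (-1) ^ r * e (n - r) * a ^ Suc r)
    + (\<Sum>r\<le>n. (-1) ^ r * (if n - r = 0 then 0 else a * e (n - r - 1)) * a ^ Suc r) = a * e n"
  proof (cases n)
    case 0 then show ?thesis by simp
  next
    case (Suc n')
    define G where "G r = (-1) ^ r * e (n - r) * a ^ Suc r" for r
    have B: "(\<Sum>r\<le>n. (-1) ^ r * e (n - r) * a ^ Suc r) = G 0 + (\<Sum>r\<le>n'. G (Suc r))"
      unfolding G_def Suc by (rule sum.atMost_Suc_shift)
    have D: "(\<Sum>r\<le>n. (-1) ^ r * (if n - r = 0 then 0 else a * e (n - r - 1)) * a ^ Suc r)
       = - (\<Sum>r\<le>n'. G (Suc r))"
    proof -
      have "(\<Sum>r\<le>n. (-1) ^ r * (if n - r = 0 then 0 else a * e (n - r - 1)) * a ^ Suc r)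
          = (\<Sum>r\<le>n'. (-1) ^ r * (if n - r = 0 then 0 else a * e (n - r - 1)) * a ^ Suc r)"
        unfolding Suc by (simp add: sum.atMost_Suc)
      also have "\<dots> = (\<Sum>r\<le>n'. - G (Suc r))"
        unfolding G_def by (rule sum.cong) (auto simp: Suc Suc_diff_le)
      finally show ?thesis by (simp add: sum_negf)
    qed
    show ?thesis unfolding B D G_def by simp
  qed
  have "(\<Sum>r\<le>n. (-1) ^ r * ecoef (a # U) (n - r) * psum (a # U) (Suc r))
      = real (Suc n) * e (Suc n) + a * real n * e n + a * e n"
    unfolding split A C using BD by simp
  also have "\<dots> = real (Suc n) * ecoef (a # U) (Suc n)"
    unfolding e' by (simp add: algebra_simps)
  finally show ?case by simp
qed



definition PP :: "real list \<Rightarrow> real poly" where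
  "PP U = prod_list (map (\<lambda>a. [:a, 1:]) U)"

lemma PP_Cons: "PP (a # U) = smult a (PP U) + pCons 0 (PP U)"
  by (simp add: PP_def mult_pCons_left)

lemma PP_monic: "degree (PP U) = length U \<and> coeff (PP U) (length U) = 1"
proof (induction U)
  case Nil then show ?case by (simp add: PP_def)
next
  case (Cons a U)
  have "PP (a # U) = [:a, 1:] * PP U" by (simp add: PP_def)
  moreover have "PP U \<noteq> 0" using Cons by auto
  moreover have "degree ([:a, 1:] * PP U) = degree [:a, 1::real:] + degree (PP U)"
    using \<open>PP U \<noteq> 0\<close> by (intro degree_mult_eq) auto
  ultimately have deg: "degree (PP (a # U)) = Suc (length U)"
    using Cons by simp
  have "coeff (PP (a # U)) (Suc (length U)) = 1"
    using Cons by (simp add: PP_Cons coeff_eq_0)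
  with deg show ?case by simp
qed

lemma PP_coeff: "m \<le> length U \<Longrightarrow> coeff (PP U) (length U - m) = ecoef U m"
proof (induction U arbitrary: m)
  case Nil then show ?case by (simp add: PP_def ecoef_Nil)
next
  case (Cons a U)
  have big: "coeff (PP U) (Suc (length U)) = 0"
    using PP_monic[of U] by (simp add: coeff_eq_0)
  show ?case
  proof (cases m)
    case 0
    then show ?thesis using PP_monic[of U] big by (simp add: PP_Cons ecoef_0)
  next
    case (Suc m')
    with Cons.prems have m': "m' \<le> length U" by simp
    have 1: "coeff (PP U) (length U - m') = ecoef U m'" using Cons.IH[OF m'] .
    show ?thesis
    proof (cases "m' = length U")
      case True
      then show ?thesis using 1 ecoef_big[of U "Suc m'"] Suc by (simp add: PP_Cons ecoef_Cons)
    next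
      case False
      then have "Suc m' \<le> length U" using m' by simp
      from Cons.IH[OF this] have 2: "coeff (PP U) (length U - Suc m') = ecoef U (Suc m')" .
      have "length U - m' = Suc (length U - Suc m')" using False m' by simp
      then show ?thesis using 1 2 Suc False m' by (simp add: PP_Cons ecoef_Cons)
    qed
  qed
qed



lemma faulhaber0: "\<exists>q :: real poly. degree q \<le> Suc s \<and> (\<forall>n. (\<Sum>h<n. real h ^ s) = poly q (real n))"
proof (induction s rule: less_induct)
  case (less s)
  then have "\<forall>t\<in>{..<s}. \<exists>q :: real poly. degree q \<le> Suc t \<and> (\<forall>n. (\<Sum>h<n. real h ^ t) = poly q (real n))"
    by blast
  then obtain Q where Q: "\<And>t. t < s \<Longrightarrow> degree (Q t) \<le> Suc t \<and> (\<forall>n. (\<Sum>h<n. real h ^ t) = poly (Q t) (real n))"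
    by (metis lessThan_iff bchoice)
  have tele: "real n ^ Suc s = (\<Sum>t\<le>s. real (Suc s choose t) * (\<Sum>h<n. real h ^ t))" for n
  proof -
    have "real n ^ Suc s = (\<Sum>h<n. (real h + 1) ^ Suc s - real h ^ Suc s)"
    proof (induction n)
      case 0 then show ?case by simp
    next
      case (Suc n) then show ?case by (simp del: power_Suc add: add.commute)
    qed
    also have "\<dots> = (\<Sum>h<n. \<Sum>t\<le>s. real (Suc s choose t) * real h ^ t)"
    proof (rule sum.cong[OF refl])
      fix h
      have "(real h + 1) ^ Suc s = (\<Sum>t\<le>Suc s. real (Suc s choose t) * real h ^ t)"
        unfolding binomial_ring by simp
      also have "\<dots> = (\<Sum>t\<le>s. real (Suc s choose t) * real h ^ t) + real h ^ Suc s"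
        by (simp add: sum.atMost_Suc)
      finally show "(real h + 1) ^ Suc s - real h ^ Suc s = (\<Sum>t\<le>s. real (Suc s choose t) * real h ^ t)"
        by simp
    qed
    also have "\<dots> = (\<Sum>t\<le>s. real (Suc s choose t) * (\<Sum>h<n. real h ^ t))"
      by (subst sum.swap) (simp add: sum_distrib_left)
    finally show ?thesis .
  qed
  define q where "q = smult (1 / real (Suc s)) (monom 1 (Suc s) - (\<Sum>t<s. smult (real (Suc s choose t)) (Q t)))"
  have "degree (\<Sum>t<s. smult (real (Suc s choose t)) (Q t)) \<le> Suc s"
  proof (rule degree_sum_le)
    fix t assume "t \<in> {..<s}"
    then show "degree (smult (real (Suc s choose t)) (Q t)) \<le> Suc s"
      using Q[of t] degree_smult_le[of "real (Suc s choose t)" "Q t"] by simp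
  qed simp
  then have dq: "degree q \<le> Suc s"
    unfolding q_def using degree_diff_le[of "monom (1::real) (Suc s)" "Suc s"]
    by (metis degree_monom_le degree_smult_le order.trans)
  have "(\<Sum>h<n. real h ^ s) = poly q (real n)" for n
  proof -
    have "real n ^ Suc s = real (Suc s) * (\<Sum>h<n. real h ^ s) + (\<Sum>t<s. real (Suc s choose t) * (\<Sum>h<n. real h ^ t))"
      unfolding tele by (simp add: sum.atMost_Suc lessThan_Suc_atMost[symmetric])
    also have "(\<Sum>t<s. real (Suc s choose t) * (\<Sum>h<n. real h ^ t)) = (\<Sum>t<s. real (Suc s choose t) * poly (Q t) (real n))"
      using Q by (intro sum.cong) auto
    finally have "(\<Sum>h<n. real h ^ s) = (real n ^ Suc s - (\<Sum>t<s. real (Suc s choose t) * poly (Q t) (real n))) / real (Suc s)"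
      by (simp add: field_simps)
    then show ?thesis unfolding q_def by (simp add: poly_monom poly_sum)
  qed
  with dq show ?case by blast
qed

lemma faulhaber:
  "\<exists>q :: real poly. degree q \<le> Suc s \<and> (\<forall>y\<le>X. (\<Sum>h\<in>{y+1..X}. real h ^ s) = poly q (real y))"
proof -
  obtain q :: "real poly" where q: "degree q \<le> Suc s" "\<And>n. (\<Sum>h<n. real h ^ s) = poly q (real n)"
    using faulhaber0 by blast
  define q' where "q' = [:poly q (real (Suc X)):] - q \<circ>\<^sub>p [:1, 1:]"
  have "degree (q \<circ>\<^sub>p [:1, 1:]) \<le> Suc s"
    using degree_pcompose_le[of q "[:1, 1:]"] q(1) by simp
  then have "degree q' \<le> Suc s" unfolding q'_def
    using degree_diff_le[of "[:poly q (real (Suc X)):]" "Suc s"] by simp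
  moreover have "(\<Sum>h\<in>{y+1..X}. real h ^ s) = poly q' (real y)" if "y \<le> X" for y
  proof -
    have "{..<Suc X} = {..<Suc y} \<union> {y+1..X}" using that by auto
    moreover have "(\<Sum>h\<in>{..<Suc y} \<union> {y+1..X}. real h ^ s) = (\<Sum>h<Suc y. real h ^ s) + (\<Sum>h\<in>{y+1..X}. real h ^ s)"
      by (rule sum.union_disjoint) auto
    ultimately have "(\<Sum>h<Suc X. real h ^ s) = (\<Sum>h<Suc y. real h ^ s) + (\<Sum>h\<in>{y+1..X}. real h ^ s)"
      by simp
    then have "(\<Sum>h\<in>{y+1..X}. real h ^ s) = (\<Sum>h<Suc X. real h ^ s) - (\<Sum>h<Suc y. real h ^ s)"
      by linarith
    also have "\<dots> = poly q (real (Suc X)) - poly q (real (Suc y))"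
      by (simp only: q(2))
    also have "\<dots> = poly q' (real y)"
      unfolding q'_def by (simp add: poly_pcompose add.commute)
    finally show ?thesis .
  qed
  ultimately show ?thesis by blast
qed



lemma W_const: "W k X 0 (\<lambda>i x. c)"
  using Wsym[of "\<lambda>x. c" k X] by (simp add: perm_invariant_def)

lemma W_sum:
  assumes "finite A" "\<And>a. a \<in> A \<Longrightarrow> W k X m (f a)"
  shows "W k X m (\<lambda>i x. \<Sum>a\<in>A. f a i x)"
  using assms
proof (induction A rule: finite_induct)
  case empty
  have "W k X m (\<lambda>i x. 0)" using Wmono[OF W_const[of k X 0]] by simp
  then show ?case by (rule Wcong) simp
next
  case (insert a A)
  have "W k X m (\<lambda>i x. f a i x + (\<Sum>a\<in>A. f a i x))"
    using insert by (intro Wadd) auto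
  then show ?case by (rule Wcong) (simp add: insert)
qed

lemma W_pow: "W k X e (\<lambda>i x. real (x ! ((a + k - i) mod k)) ^ e)"
proof (induction e)
  case 0
  show ?case using W_const[of k X 1] by (rule Wcong) simp
next
  case (Suc e)
  have "W k X (1 + e) (\<lambda>i x. real (x ! ((a + k - i) mod k)) * real (x ! ((a + k - i) mod k)) ^ e)"
    by (rule Wmul[OF Wcoord Suc])
  then have "W k X (Suc e) (\<lambda>i x. real (x ! ((a + k - i) mod k)) * real (x ! ((a + k - i) mod k)) ^ e)"
    by simp
  then show ?case by (rule Wcong) simp
qed

lemma W_polysum:
  assumes "degree q \<le> n"
  shows "W k X n (\<lambda>i x. \<Sum>a<k. \<phi> a * poly q (real (x ! ((a + k - i) mod k))))"
proof -
  have "W k X n (\<lambda>i x. \<Sum>a<k. \<Sum>e\<le>degree q. (\<phi> a * coeff q e) * real (x ! ((a + k - i) mod k)) ^ e)"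
  proof (intro W_sum)
    fix a e assume "e \<in> {..degree q}"
    then have "e \<le> n" using assms by simp
    have h: "W k X (0 + e) (\<lambda>i x. (\<phi> a * coeff q e) * real (x ! ((a + k - i) mod k)) ^ e)"
      by (rule Wmul[OF W_const W_pow])
    show "W k X n (\<lambda>i x. (\<phi> a * coeff q e) * real (x ! ((a + k - i) mod k)) ^ e)"
      using Wmono[OF h, of n] \<open>e \<le> n\<close> by simp
  qed auto
  then show ?thesis
    by (rule Wcong) (simp add: poly_altdef sum_distrib_left mult.assoc)
qed

lemma W_symsum: "W k X 0 (\<lambda>i x. \<Sum>j<k. f (x ! j))"
proof -
  have "perm_invariant (\<lambda>x. sum_list (map f x))"
    unfolding perm_invariant_def by (metis mset_map sum_mset_sum_list)
  then have "W k X 0 (\<lambda>i x. sum_list (map f x))" by (rule Wsym)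
  then show ?thesis
  proof (rule Wcong)
    fix i x assume "dm k X i x"
    then have "length x = k" by (simp add: dm_def)
    then show "(\<Sum>j<k. f (x ! j)) = sum_list (map f x)"
      by (simp add: sum_list_sum_nth atLeast0LessThan)
  qed
qed

definition R :: "nat \<Rightarrow> nat \<Rightarrow> (nat \<Rightarrow> real) \<Rightarrow> nat \<Rightarrow> nat list \<Rightarrow> real list" where
  "R k X b i x = concat (map (\<lambda>j. map (\<lambda>h. real h - b ((j + i) mod k)) [x ! j + 1..<X + 1]) [0..<k])"

lemma psum_concat: "psum (concat Ls) r = (\<Sum>L\<leftarrow>Ls. psum L r)"
  by (induction Ls) (simp_all add: psum_def)

lemma sum_list_upt_conv: "(\<Sum>j\<leftarrow>[m..<n]. f j) = (\<Sum>j\<in>{m..<n}. f j)"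
  by (simp add: interv_sum_list_conv_sum_set_nat)

lemma psum_R: "psum (R k X b i x) r = (\<Sum>j<k. \<Sum>h\<in>{x ! j + 1..X}. (real h - b ((j + i) mod k)) ^ r)"
proof -
  have "psum (R k X b i x) r = (\<Sum>j\<leftarrow>[0..<k]. psum (map (\<lambda>h. real h - b ((j + i) mod k)) [x ! j + 1..<X + 1]) r)"
    unfolding R_def psum_concat by (simp add: o_def)
  also have "\<dots> = (\<Sum>j\<leftarrow>[0..<k]. \<Sum>h\<in>{x ! j + 1..X}. (real h - b ((j + i) mod k)) ^ r)"
    unfolding psum_def map_map o_def Suc_eq_plus1[symmetric] sum_list_upt_conv atLeastLessThanSuc_atLeastAtMost ..

  also have "\<dots> = (\<Sum>j<k. \<Sum>h\<in>{x ! j + 1..X}. (real h - b ((j + i) mod k)) ^ r)"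
    by (simp add: sum_list_upt_conv atLeast0LessThan)
  finally show ?thesis .
qed



lemma W_psum:
  assumes k: "k > 0"
  shows "W k X r (\<lambda>i x. psum (R k X b i x) r)"
proof -
  define Sx where "Sx s y = (\<Sum>h\<in>{y+1..X}. real h ^ s)" for s y
  define T where "T s i x = (\<Sum>j<k. of_nat (r choose s) * (- b ((j + i) mod k)) ^ (r - s) * Sx s (x ! j))" for s i x
  have eq: "psum (R k X b i x) r = (\<Sum>s\<le>r. T s i x)" for i x
  proof -
    have "psum (R k X b i x) r = (\<Sum>j<k. \<Sum>h\<in>{x ! j + 1..X}. \<Sum>s\<le>r. of_nat (r choose s) * real h ^ s * (- b ((j + i) mod k)) ^ (r - s))"
      unfolding psum_R using binomial_ring[of "real _" "- b _" r] by simp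
    also have "\<dots> = (\<Sum>j<k. \<Sum>s\<le>r. \<Sum>h\<in>{x ! j + 1..X}. of_nat (r choose s) * real h ^ s * (- b ((j + i) mod k)) ^ (r - s))"
      by (intro sum.cong refl sum.swap)
    also have "\<dots> = (\<Sum>s\<le>r. \<Sum>j<k. \<Sum>h\<in>{x ! j + 1..X}. of_nat (r choose s) * real h ^ s * (- b ((j + i) mod k)) ^ (r - s))"
      by (rule sum.swap)
    also have "\<dots> = (\<Sum>s\<le>r. T s i x)"
      unfolding T_def Sx_def
      by (intro sum.cong refl) (simp add: sum_distrib_left sum_distrib_right mult_ac)
    finally show ?thesis .
  qed
  have each: "W k X r (T s)" if "s \<in> {..r}" for s
  proof (cases "s = r")
    case True
    have "W k X 0 (\<lambda>i x. \<Sum>j<k. Sx r (x ! j))" by (rule W_symsum)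
    then have "W k X r (\<lambda>i x. \<Sum>j<k. Sx r (x ! j))" by (rule Wmono) simp
    then show ?thesis
      by (rule Wcong) (simp add: T_def True)
  next
    case False
    with that have sr: "s < r" by simp
    obtain q :: "real poly" where q: "degree q \<le> Suc s" "\<And>y. y \<le> X \<Longrightarrow> Sx s y = poly q (real y)"
      using faulhaber[of s X] unfolding Sx_def by blast
    define \<phi> where "\<phi> a = of_nat (r choose s) * (- b a) ^ (r - s)" for a
    have "W k X r (\<lambda>i x. \<Sum>a<k. \<phi> a * poly q (real (x ! ((a + k - i) mod k))))"
      using q(1) sr by (intro W_polysum) simp
    then show ?thesis
    proof (rule Wcong)
      fix i x assume d: "dm k X i x"
      then have ik: "i < k" and xX: "\<And>j. j < k \<Longrightarrow> x ! j \<le> X" by (auto simp: dm_def)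
      define F where "F j = \<phi> ((j + i) mod k) * poly q (real (x ! j))" for j
      have "T s i x = (\<Sum>j<k. F j)"
        unfolding T_def F_def \<phi>_def using xX q(2) by (intro sum.cong refl) simp
      also have "\<dots> = (\<Sum>a<k. F ((a + (k - i)) mod k))"
        by (rule sum_mod_shift[OF k, symmetric])
      also have "\<dots> = (\<Sum>a<k. \<phi> a * poly q (real (x ! ((a + k - i) mod k))))"
      proof (intro sum.cong refl)
        fix a assume "a \<in> {..<k}"
        then have a: "a < k" by simp
        have "((a + (k - i)) mod k + i) mod k = (a + (k - i) + i) mod k"
          by (simp add: mod_add_left_eq)
        also have "a + (k - i) + i = a + k" using ik by simp
        finally have "((a + (k - i)) mod k + i) mod k = a" using a by simp
        moreover have "a + (k - i) = a + k - i" using ik by simp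
        ultimately show "F ((a + (k - i)) mod k) = \<phi> a * poly q (real (x ! ((a + k - i) mod k)))"
          unfolding F_def by simp
      qed
      finally show "T s i x = (\<Sum>a<k. \<phi> a * poly q (real (x ! ((a + k - i) mod k))))" .
    qed
  qed
  have "W k X r (\<lambda>i x. \<Sum>s\<le>r. T s i x)"
    using each by (intro W_sum) auto
  then show ?thesis by (rule Wcong) (simp add: eq)
qed

lemma W_ecoef:
  assumes k: "k > 0"
  shows "W k X m (\<lambda>i x. ecoef (R k X b i x) m)"
proof (induction m rule: less_induct)
  case (less m)
  show ?case
  proof (cases m)
    case 0
    show ?thesis unfolding 0 using W_const[of k X 1] by (rule Wcong) (simp add: ecoef_0)
  next
    case (Suc n)
    have "W k X (Suc n) (\<lambda>i x. \<Sum>r\<le>n. (1 / real (Suc n) * (-1) ^ r) * ecoef (R k X b i x) (n - r) * psum (R k X b i x) (Suc r))"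
    proof (intro W_sum)
      fix r assume "r \<in> {..n}"
      then have rn: "r \<le> n" by simp
      have h1: "W k X (0 + (n - r)) (\<lambda>i x. (1 / real (Suc n) * (-1) ^ r) * ecoef (R k X b i x) (n - r))"
        by (rule Wmul[OF W_const less.IH]) (simp add: Suc)
      have h2: "W k X (0 + (n - r) + Suc r) (\<lambda>i x. (1 / real (Suc n) * (-1) ^ r) * ecoef (R k X b i x) (n - r) * psum (R k X b i x) (Suc r))"
        by (rule Wmul[OF h1 W_psum[OF k]])
      show "W k X (Suc n) (\<lambda>i x. (1 / real (Suc n) * (-1) ^ r) * ecoef (R k X b i x) (n - r) * psum (R k X b i x) (Suc r))"
        using h2 rn by simp
    qed simp
    then show ?thesis unfolding Suc
    proof (rule Wcong)
      fix i x
      let ?N = "real (Suc n)"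
      have eqn: "?N * ecoef (R k X b i x) (Suc n) = (\<Sum>r\<le>n. (-1) ^ r * ecoef (R k X b i x) (n - r) * psum (R k X b i x) (Suc r))"
        by (rule newton)
      have "(\<Sum>r\<le>n. (1 / ?N * (-1) ^ r) * ecoef (R k X b i x) (n - r) * psum (R k X b i x) (Suc r))
          = (1 / ?N) * (\<Sum>r\<le>n. (-1) ^ r * ecoef (R k X b i x) (n - r) * psum (R k X b i x) (Suc r))"
        by (simp add: sum_distrib_left mult.assoc)
      also have "\<dots> = (1 / ?N) * (?N * ecoef (R k X b i x) (Suc n))"
        by (simp only: eqn)
      also have "\<dots> = ecoef (R k X b i x) (Suc n)"
        by (simp del: of_nat_Suc)
      finally show "ecoef (R k X b i x) (Suc n) = (\<Sum>r\<le>n. (1 / real (Suc n) * (-1) ^ r) * ecoef (R k X b i x) (n - r) * psum (R k X b i x) (Suc r))"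
        by simp
    qed
  qed
qed



lemma PP_concat: "PP (concat Ls) = (\<Prod>L\<leftarrow>Ls. PP L)"
  by (induction Ls) (simp_all add: PP_def)

lemma prod_list_upt_conv: "(\<Prod>j\<leftarrow>[m..<n]. f j) = (\<Prod>j\<in>{m..<n}. f j)"
  using prod.distinct_set_conv_list[of "[m..<n]" f] by simp

lemma E_poly_R: "E_poly k X b x = (\<Sum>i<k. PP (R k X b i x))"
proof -
  have "PP (R k X b i x) = (\<Prod>j<k. \<Prod>h\<in>{x ! j + 1..X}. [:real h - b ((j + i) mod k), 1:])" for i
  proof -
    have "PP (R k X b i x) = (\<Prod>j\<leftarrow>[0..<k]. PP (map (\<lambda>h. real h - b ((j + i) mod k)) [x ! j + 1..<X + 1]))"
      unfolding R_def PP_concat by (simp add: o_def)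
    also have "\<dots> = (\<Prod>j\<leftarrow>[0..<k]. \<Prod>h\<in>{x ! j + 1..X}. [:real h - b ((j + i) mod k), 1:])"
      unfolding PP_def map_map o_def Suc_eq_plus1[symmetric] prod_list_upt_conv atLeastLessThanSuc_atLeastAtMost ..
    also have "\<dots> = (\<Prod>j<k. \<Prod>h\<in>{x ! j + 1..X}. [:real h - b ((j + i) mod k), 1:])"
      by (simp add: prod_list_upt_conv atLeast0LessThan)
    finally show ?thesis .
  qed
  then show ?thesis unfolding E_poly_def by simp
qed

lemma length_R: "length (R k X b i x) = L_deg k X x"
proof -
  have "length (R k X b i x) = (\<Sum>j\<leftarrow>[0..<k]. X - x ! j)"
    unfolding R_def by (simp add: length_concat o_def del: upt_Suc)
  also have "\<dots> = L_deg k X x"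
    unfolding L_deg_def by (simp add: sum_list_upt_conv atLeast0LessThan)
  finally show ?thesis .
qed

lemma sum_sum_list_swap: "(\<Sum>i\<in>A. \<Sum>u\<leftarrow>T. f u i) = (\<Sum>u\<leftarrow>T. \<Sum>i\<in>A. f u i)"
  by (induction T) (simp_all add: sum.distrib)

lemma mono_t_cyc:
  "(\<Sum>i<k. mono_t k is i x) = cyc_stat k is x"
proof -
  define G where "G j = (\<Prod>p\<leftarrow>is. real (x ! ((p + j) mod k)))" for j
  have "(\<Sum>i<k. mono_t k is i x) = (\<Sum>i<k. G ((k - i) mod k))"
  proof (intro sum.cong refl)
    fix i assume "i \<in> {..<k}"
    then have "(p + k - i) mod k = (p + (k - i) mod k) mod k" for p
      by (simp add: mod_add_right_eq)
    then show "mono_t k is i x = G ((k - i) mod k)"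
      unfolding mono_t_def G_def by simp
  qed
  also have "\<dots> = (\<Sum>j<k. G j)" by (rule sum_reflect)
  also have "\<dots> = cyc_stat k is x"
    unfolding cyc_stat_def G_def
    by (intro sum.cong refl) (simp add: prod.list_conv_set_nth atLeast0LessThan)
  finally show ?thesis .
qed

theorem lemma5p2:
  fixes k xs :: nat and b :: "nat \<Rightarrow> real" and m :: nat
  assumes "k > 0" and "xs > 0"
  shows "(\<forall>x. length x = k \<and> (\<forall>j<k. x ! j \<le> xs) \<longrightarrow> degree (E_poly k xs b x) = L_deg k xs x)
    \<and> (\<exists>T :: (nat list \<times> (nat list \<Rightarrow> real)) list.
         (\<forall>(is, c) \<in> set T. length is \<le> m \<and> perm_invariant c) \<and>
         (\<forall>x. length x = k \<and> (\<forall>j<k. x ! j \<le> xs) \<longrightarrow>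
            (if m \<le> L_deg k xs x then coeff (E_poly k xs b x) (L_deg k xs x - m) else 0)
              = (\<Sum>(is, c) \<leftarrow> T. c x * cyc_stat k is x)))"
proof
  have deg: "degree (E_poly k xs b x) = L_deg k xs x" for x
  proof -
    let ?L = "L_deg k xs x"
    have mon: "degree (PP (R k xs b i x)) = ?L \<and> coeff (PP (R k xs b i x)) ?L = 1" for i
      using PP_monic[of "R k xs b i x"] length_R[of k xs b i x] by simp
    have "coeff (E_poly k xs b x) ?L = real k"
      unfolding E_poly_R coeff_sum using mon by simp
    then have "coeff (E_poly k xs b x) ?L \<noteq> 0" using assms(1) by simp
    then have 1: "?L \<le> degree (E_poly k xs b x)" by (rule le_degree)
    have "coeff (E_poly k xs b x) n = 0" if "n > ?L" for n
      unfolding E_poly_R coeff_sum using mon that by (simp add: coeff_eq_0)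
    then have 2: "degree (E_poly k xs b x) \<le> ?L" by (intro degree_le) auto
    from 1 2 show ?thesis by simp
  qed
  then show "\<forall>x. length x = k \<and> (\<forall>j<k. x ! j \<le> xs) \<longrightarrow> degree (E_poly k xs b x) = L_deg k xs x"
    by blast
next
  have "NF k xs m (\<lambda>i x. ecoef (R k xs b i x) m)"
    by (rule W_NF[OF W_ecoef[OF assms(1)]])
  then obtain T where T: "\<forall>(is, c) \<in> set T. length is \<le> m \<and> perm_invariant c"
    "\<forall>i x. dm k xs i x \<longrightarrow> ecoef (R k xs b i x) m = (\<Sum>(is, c) \<leftarrow> T. c x * mono_t k is i x)"
    unfolding NF_def by blast
  have "(if m \<le> L_deg k xs x then coeff (E_poly k xs b x) (L_deg k xs x - m) else 0)
              = (\<Sum>(is, c) \<leftarrow> T. c x * cyc_stat k is x)"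
    if x: "length x = k" "\<forall>j<k. x ! j \<le> xs" for x
  proof -
    have "(if m \<le> L_deg k xs x then coeff (E_poly k xs b x) (L_deg k xs x - m) else 0)
        = (\<Sum>i<k. ecoef (R k xs b i x) m)"
    proof (cases "m \<le> L_deg k xs x")
      case True
      then show ?thesis
        unfolding E_poly_R coeff_sum using PP_coeff[of m "R k xs b _ x"] length_R[of k xs b _ x]
        by simp
    next
      case False
      then show ?thesis using ecoef_big[of "R k xs b _ x" m] length_R[of k xs b _ x] by simp
    qed
    also have "\<dots> = (\<Sum>i<k. \<Sum>(is, c) \<leftarrow> T. c x * mono_t k is i x)"
      using T(2) x by (intro sum.cong refl) (simp add: dm_def)
    also have "\<dots> = (\<Sum>(is, c) \<leftarrow> T. \<Sum>i<k. c x * mono_t k is i x)"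
      by (induction T) (simp_all add: sum.distrib split_def)
    also have "\<dots> = (\<Sum>(is, c) \<leftarrow> T. c x * cyc_stat k is x)"
      by (simp add: split_def sum_distrib_left[symmetric] mono_t_cyc)
    finally show ?thesis .
  qed
  with T(1) show "\<exists>T :: (nat list \<times> (nat list \<Rightarrow> real)) list.
         (\<forall>(is, c) \<in> set T. length is \<le> m \<and> perm_invariant c) \<and>
         (\<forall>x. length x = k \<and> (\<forall>j<k. x ! j \<le> xs) \<longrightarrow>
            (if m \<le> L_deg k xs x then coeff (E_poly k xs b x) (L_deg k xs x - m) else 0)
              = (\<Sum>(is, c) \<leftarrow> T. c x * cyc_stat k is x))"
    by blast
qed

end
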